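(* Let $C$ be a nonempty subset of a Banach space $X$ and let $T:C\to C$ be a Kannan mapping. Then $T$ is an orbitally Kannan mapping which diminishes the radius of orbits.
   Context: $T:C\to C$ is Kannan if $\|Tx-Ty\|\le\frac12(\|x-Tx\|+\|y-Ty\|)$ for all $x,y\in C$. For $x\in X$ and $A\subseteq X$, $r_x(A)=\sup\{\|x-y\|:y\in A\}$; $O_T(x)=\{x,Tx,T^2x,\dots\}$. $T$ is orbitally Kannan if $\|Tx-Ty\|\le\frac12\big(r_x(O_T(x))+r_y(O_T(y))\big)$ for all $x,y\in C$. $T$ diminishes the radius of orbits if $r_{Tx}(O_T(Tx))\le r_x(O_T(x))$ for all $x\in C$. *)

theory Defs
  imports "HOL-Analysis.Analysis"
begin

definition kannan :: "'a::real_normed_vector set \<Rightarrow> ('a \<Rightarrow> 'a) \<Rightarrow> bool" where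
  "kannan C T \<longleftrightarrow> (\<forall>x\<in>C. \<forall>y\<in>C.
     norm (T x - T y) \<le> (1/2) * (norm (x - T x) + norm (y - T y)))"

text \<open>Radius of a set with respect to a point; extended-real valued so that
  unbounded sets get radius infinity.\<close>
definition rad :: "'a::real_normed_vector \<Rightarrow> 'a set \<Rightarrow> ereal" where
  "rad x A = (SUP y\<in>A. ereal (norm (x - y)))"

definition orbit :: "('a \<Rightarrow> 'a) \<Rightarrow> 'a \<Rightarrow> 'a set" where
  "orbit T x = range (\<lambda>n. (T ^^ n) x)"

definition orbitally_kannan :: "'a::real_normed_vector set \<Rightarrow> ('a \<Rightarrow> 'a) \<Rightarrow> bool" where
  "orbitally_kannan C T \<longleftrightarrow> (\<forall>x\<in>C. \<forall>y\<in>C.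
     ereal (norm (T x - T y)) \<le> ereal (1/2) * (rad x (orbit T x) + rad y (orbit T y)))"

definition diminishes_orbit_radius :: "'a::real_normed_vector set \<Rightarrow> ('a \<Rightarrow> 'a) \<Rightarrow> bool" where
  "diminishes_orbit_radius C T \<longleftrightarrow> (\<forall>x\<in>C. rad (T x) (orbit T (T x)) \<le> rad x (orbit T x))"

end

theory Submission
  imports Defs
begin

lemma iter_in:
  assumes "T ` C \<subseteq> C" "x \<in> C" shows "(T ^^ n) x \<in> C"
  using assms by (induction n) auto

lemma step_dec:
  assumes "T ` C \<subseteq> C" "kannan C T" "z \<in> C"
  shows "norm (T z - T (T z)) \<le> norm (z - T z)"
proof -
  have "T z \<in> C" using assms by auto
  then have "norm (T z - T (T z)) \<le> (1/2) * (norm (z - T z) + norm (T z - T (T z)))"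
    using assms unfolding kannan_def by blast
  then show ?thesis by simp
qed

lemma iter_dec:
  assumes "T ` C \<subseteq> C" "kannan C T" "x \<in> C"
  shows "norm ((T ^^ n) x - T ((T ^^ n) x)) \<le> norm (x - T x)"
proof (induction n)
  case 0 then show ?case by simp
next
  case (Suc n)
  have "norm ((T ^^ Suc n) x - T ((T ^^ Suc n) x)) \<le> norm ((T ^^ n) x - T ((T ^^ n) x))"
    using step_dec[OF assms(1,2) iter_in[OF assms(1,3)]] by simp
  then show ?case using Suc by linarith
qed

lemma le_rad:
  "ereal (norm (x - (T ^^ m) x)) \<le> rad x (orbit T x)"
  unfolding rad_def orbit_def by (rule SUP_upper) auto

theorem lemma4p1:
  fixes C :: "'a::banach set" and T :: "'a \<Rightarrow> 'a"
  assumes "C \<noteq> {}" and "T ` C \<subseteq> C" and "kannan C T"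
  shows "orbitally_kannan C T \<and> diminishes_orbit_radius C T"
proof
  show "orbitally_kannan C T"
    unfolding orbitally_kannan_def
  proof (intro ballI)
    fix x y assume xy: "x \<in> C" "y \<in> C"
    have k: "norm (T x - T y) \<le> (1/2) * (norm (x - T x) + norm (y - T y))"
      using assms(3) xy unfolding kannan_def by blast
    have a: "ereal (norm (x - T x)) \<le> rad x (orbit T x)"
      using le_rad[where x=x and T=T and m=1] by simp
    have b: "ereal (norm (y - T y)) \<le> rad y (orbit T y)"
      using le_rad[where x=y and T=T and m=1] by simp
    have "ereal (norm (T x - T y)) \<le> ereal ((1/2) * (norm (x - T x) + norm (y - T y)))"
      using k by simp
    also have "\<dots> = ereal (1/2) * (ereal (norm (x - T x)) + ereal (norm (y - T y)))"
      by simp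
    also have "\<dots> \<le> ereal (1/2) * (rad x (orbit T x) + rad y (orbit T y))"
      by (rule ereal_mult_left_mono[OF add_mono[OF a b]]) simp
    finally show "ereal (norm (T x - T y)) \<le> ereal (1/2) * (rad x (orbit T x) + rad y (orbit T y))" .
  qed
  show "diminishes_orbit_radius C T"
    unfolding diminishes_orbit_radius_def
  proof
    fix x assume x: "x \<in> C"
    have a: "ereal (norm (x - T x)) \<le> rad x (orbit T x)"
      using le_rad[where x=x and T=T and m=1] by simp
    have "ereal (norm (T x - (T ^^ n) (T x))) \<le> rad x (orbit T x)" for n
    proof (cases n)
      case 0
      have "ereal (norm (T x - (T ^^ n) (T x))) \<le> ereal (norm (x - T x))" using 0 by simp
      then show ?thesis using a by (rule order_trans)
    next
      case (Suc m)
      have eq: "(T ^^ n) (T x) = T ((T ^^ n) x)" by (simp add: funpow_swap1)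
      have "norm (T x - T ((T ^^ n) x)) \<le> (1/2) * (norm (x - T x) + norm ((T ^^ n) x - T ((T ^^ n) x)))"
        using assms(3) x iter_in[OF assms(2) x] unfolding kannan_def by blast
      also have "\<dots> \<le> norm (x - T x)" using iter_dec[OF assms(2,3) x, of n] by simp
      finally have "ereal (norm (T x - (T ^^ n) (T x))) \<le> ereal (norm (x - T x))" using eq by simp
      then show ?thesis using a by (rule order_trans)
    qed
    then show "rad (T x) (orbit T (T x)) \<le> rad x (orbit T x)"
      unfolding rad_def[of "T x"] orbit_def by (auto intro!: SUP_least)
  qed
qed

end
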